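(* Let $b\ge2$ and let $S$ be a nonempty subset of $\mathbb{Z}$. Then all $b$-orderings $\mathbf{a}$ of $S$ give the same values $\alpha_k(S,b,\mathbf{a})$ for each $k$, and, writing $\alpha_k(S,b)$ for this common value, $$\alpha_k(S,b)=\alpha_k(\varphi_b(S))\quad\text{for all } k\ge1,$$ where $\alpha_k(\varphi_b(S))$ is the $t$-exponent sequence of the set $\varphi_b(S)\subseteq\mathbb{Q}[[t]]$.
   Context: For $b\ge2$ and $a\in\mathbb{Z}$, $\operatorname{ord}_b(a)$ is the largest $k\in\mathbb{N}$ with $b^k\mid a$ ($+\infty$ for $a=0$). A $b$-ordering of $S$ is a sequence $\mathbf{a}=(a_i)_{i\ge0}$ in $S$ such that for each $i\ge1$, $a_i$ attains $\min_{a'\in S}\sum_{j=0}^{i-1}\operatorname{ord}_b(a'-a_j)$; $\alpha_k(S,b,\mathbf{a}):=\sum_{j=0}^{k-1}\operatorname{ord}_b(a_k-a_j)$. The map $\varphi_b:\mathbb{Z}\to\mathbb{Q}[[t]]$ is $\varphi_b(a)=\sum_{k\ge0}d_k t^k$ where $d_k=\lfloor a/b^k\rfloor-b\lfloor a/b^{k+1}\rfloor$ are the base-$b$ digits of $a$. For $f\in\mathbb{Q}[[t]]$, $\operatorname{ord}_t(f)$ is the largest $\alpha$ with $t^\alpha\mid f$ ($+\infty$ for $f=0$). For nonempty $U\subseteq\mathbb{Q}[[t]]$, a $t$-ordering of $U$ is a sequence $(f_i)_{i\ge0}$ in $U$ with each $f_k$ ($k\ge1$) minimizing $\sum_{j=0}^{k-1}\operatorname{ord}_t(f_k-f_j)$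 over $U$; the $t$-exponent sequence $\alpha_k(U):=\sum_{j=0}^{k-1}\operatorname{ord}_t(f_k-f_j)$ for any $t$-ordering (independent of the choice). *)

theory Defs
  imports "HOL-Computational_Algebra.Formal_Power_Series" "HOL-Library.Extended_Nat"
begin

definition ord_b :: "int \<Rightarrow> int \<Rightarrow> enat" where
  "ord_b b a = (if a = 0 then \<infinity> else enat (GREATEST k. b ^ k dvd a))"

definition is_b_ordering :: "int set \<Rightarrow> int \<Rightarrow> (nat \<Rightarrow> int) \<Rightarrow> bool" where
  "is_b_ordering S b a \<longleftrightarrow>
     (\<forall>i. a i \<in> S) \<and>
     (\<forall>i\<ge>1. \<forall>a'\<in>S. (\<Sum>j<i. ord_b b (a i - a j)) \<le> (\<Sum>j<i. ord_b b (a' - a j)))"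

definition alpha_b :: "int \<Rightarrow> (nat \<Rightarrow> int) \<Rightarrow> nat \<Rightarrow> enat" where
  "alpha_b b a k = (\<Sum>j<k. ord_b b (a k - a j))"

text \<open>The digit map phi_b into Q[[t]] (floor-based digits, so negative integers
  have infinitely many digits b-1).\<close>
definition phi_b :: "int \<Rightarrow> int \<Rightarrow> rat fps" where
  "phi_b b a = Abs_fps (\<lambda>k. of_int (a div b ^ k - b * (a div b ^ (Suc k))))"

definition ord_t :: "rat fps \<Rightarrow> enat" where
  "ord_t f = (if f = 0 then \<infinity> else enat (GREATEST k. fps_X ^ k dvd f))"

definition is_t_ordering :: "rat fps set \<Rightarrow> (nat \<Rightarrow> rat fps) \<Rightarrow> bool" where
  "is_t_ordering U f \<longleftrightarrow>
     (\<forall>i. f i \<in> U) \<and>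
     (\<forall>k\<ge>1. \<forall>g\<in>U. (\<Sum>j<k. ord_t (f k - f j)) \<le> (\<Sum>j<k. ord_t (g - f j)))"

definition alpha_t_seq :: "(nat \<Rightarrow> rat fps) \<Rightarrow> nat \<Rightarrow> enat" where
  "alpha_t_seq f k = (\<Sum>j<k. ord_t (f k - f j))"

text \<open>t-exponent sequence of U, computed from some t-ordering (independent of choice).\<close>
definition t_exponent :: "rat fps set \<Rightarrow> nat \<Rightarrow> enat" where
  "t_exponent U k = alpha_t_seq (SOME f. is_t_ordering U f) k"

end

theory Submission
  imports Defs
begin


lemma enat_eqI_le:
  fixes u v :: enat
  assumes "\<And>n. enat n \<le> u \<longleftrightarrow> enat n \<le> v"
  shows "u = v"
proof (cases u)
  case (enat m)
  then show ?thesis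
  proof (cases v)
    case (enat m')
    then show ?thesis using assms[of m] assms[of m'] \<open>u = enat m\<close> by auto
  next
    case infinity
    then show ?thesis using assms[of "Suc m"] \<open>u = enat m\<close> by auto
  qed
next
  case infinity
  show ?thesis
  proof (cases v)
    case (enat m')
    then show ?thesis using assms[of "Suc m'"] infinity by auto
  qed (use infinity in simp)
qed

lemma ord_b_bound:
  fixes b d :: int
  assumes "b \<ge> 2" "d \<noteq> 0" "b ^ k dvd d"
  shows "k \<le> nat \<bar>d\<bar>"
proof -
  have "int k < int (2 ^ k)" using less_exp[of k] by (simp only: of_nat_less_iff)
  also have "int (2 ^ k) = (2::int) ^ k" by simp
  also have "(2::int) ^ k \<le> b ^ k" by (rule power_mono) (use assms(1) in auto)
  also have "b ^ k \<le> \<bar>d\<bar>"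
  proof -
    have "\<bar>b ^ k\<bar> \<le> \<bar>d\<bar>" by (rule dvd_imp_le_int) (use assms(2,3) in auto)
    moreover have "b ^ k > 0" using assms(1) by simp
    ultimately show ?thesis by simp
  qed
  finally show ?thesis by simp
qed

lemma ord_b_le_iff:
  fixes b d :: int
  assumes "b \<ge> 2"
  shows "enat n \<le> ord_b b d \<longleftrightarrow> b ^ n dvd d"
proof (cases "d = 0")
  case True then show ?thesis by (simp add: ord_b_def)
next
  case False
  let ?G = "GREATEST k. b ^ k dvd d"
  have bd: "\<And>k. b ^ k dvd d \<Longrightarrow> k \<le> nat \<bar>d\<bar>" using ord_b_bound[OF assms False] by blast
  have G: "b ^ ?G dvd d" by (rule GreatestI_nat[of _ 0]) (use bd in auto)
  show ?thesis
  proof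
    assume "enat n \<le> ord_b b d"
    then have "n \<le> ?G" using False by (simp add: ord_b_def)
    then show "b ^ n dvd d" using G le_imp_power_dvd dvd_trans by blast
  next
    assume "b ^ n dvd d"
    then have "n \<le> ?G" using bd by (intro Greatest_le_nat) auto
    then show "enat n \<le> ord_b b d" using False by (simp add: ord_b_def)
  qed
qed

lemma ord_b_mult:
  fixes b d :: int
  assumes "b \<ge> 2"
  shows "ord_b b (b * d) = eSuc (ord_b b d)"
proof (rule enat_eqI_le)
  fix n
  show "enat n \<le> ord_b b (b * d) \<longleftrightarrow> enat n \<le> eSuc (ord_b b d)"
  proof (cases n)
    case 0 then show ?thesis by (simp add: zero_enat_def[symmetric])
  next
    case (Suc m)
    have "enat n \<le> eSuc (ord_b b d) \<longleftrightarrow> enat m \<le> ord_b b d"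
      unfolding Suc eSuc_enat[symmetric] by (rule eSuc_ile_mono)
    moreover have "b ^ n dvd b * d \<longleftrightarrow> b ^ m dvd d"
      unfolding Suc power_Suc by (rule dvd_mult_cancel_left[THEN trans]) (use assms in simp)
    ultimately show ?thesis using ord_b_le_iff[OF assms] by simp
  qed
qed

lemma ord_b_not_dvd:
  fixes b d :: int
  assumes "b \<ge> 2" "\<not> b dvd d"
  shows "ord_b b d = 0"
proof -
  have "\<not> enat 1 \<le> ord_b b d" using ord_b_le_iff[OF assms(1), of 1 d] assms(2) by simp
  then show ?thesis by (cases "ord_b b d") (auto simp: zero_enat_def)
qed

lemma ord_b_uminus:
  fixes b d :: int
  assumes "b \<ge> 2"
  shows "ord_b b (- d) = ord_b b d"
  by (rule enat_eqI_le) (simp only: ord_b_le_iff[OF assms] dvd_minus_iff)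

lemma ord_b_inf_iff: "ord_b b d = \<infinity> \<longleftrightarrow> d = 0"
  by (simp add: ord_b_def)

lemma ord_t_le_iff: "enat n \<le> ord_t f \<longleftrightarrow> (\<forall>k<n. fps_nth f k = 0)"
proof (cases "f = 0")
  case True then show ?thesis by (simp add: ord_t_def)
next
  case False
  have "(GREATEST k. fps_X ^ k dvd f) = subdegree f"
  proof (rule Greatest_equality)
    show "fps_X ^ subdegree f dvd f" using False by (simp add: fps_dvd_iff fps_X_power_subdegree)
    show "\<And>y. fps_X ^ y dvd f \<Longrightarrow> y \<le> subdegree f" using False by (simp add: fps_dvd_iff fps_X_power_subdegree)
  qed
  then have "ord_t f = enat (subdegree f)" using False by (simp add: ord_t_def)
  moreover have "n \<le> subdegree f \<longleftrightarrow> (\<forall>k<n. fps_nth f k = 0)"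
  proof
    assume "n \<le> subdegree f"
    then show "\<forall>k<n. fps_nth f k = 0"
      by (intro allI impI nth_less_subdegree_zero) simp
  next
    assume "\<forall>k<n. fps_nth f k = 0"
    then show "n \<le> subdegree f" using False by (intro subdegree_geI) auto
  qed
  ultimately show ?thesis by simp
qed

lemma digit_eq: 
  fixes b x :: int assumes "b \<ge> 2"
  shows "x div b ^ k - b * (x div b ^ Suc k) = (x div b ^ k) mod b"
proof -
  have "x div b ^ Suc k = x div b ^ k div b"
    unfolding power_Suc2 using zdiv_zmult2_eq[of b x "b ^ k"] assms by simp
  then show ?thesis by (simp only: minus_mult_div_eq_mod)
qed

lemma dvd_digits:
  fixes b x y :: int assumes "b \<ge> 2"
  shows "b ^ n dvd x - y \<longleftrightarrow> (\<forall>k<n. (x div b ^ k) mod b = (y div b ^ k) mod b)"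
proof (induction n)
  case 0 then show ?case by simp
next
  case (Suc n)
  have bn: "b ^ n > 0" using assms by simp
  have ex: "x mod b ^ Suc n = b ^ n * ((x div b ^ n) mod b) + x mod b ^ n"
    using zmod_zmult2_eq[of b "x" "b^n"] assms by (simp add: mult.commute)
  have ey: "y mod b ^ Suc n = b ^ n * ((y div b ^ n) mod b) + y mod b ^ n"
    using zmod_zmult2_eq[of b "y" "b^n"] assms by (simp add: mult.commute)
  have "b ^ Suc n dvd x - y \<longleftrightarrow> x mod b ^ Suc n = y mod b ^ Suc n"
    by (simp add: mod_eq_dvd_iff)
  also have "\<dots> \<longleftrightarrow> (x mod b ^ n = y mod b ^ n \<and> (x div b ^ n) mod b = (y div b ^ n) mod b)"
  proof
    assume h: "x mod b ^ Suc n = y mod b ^ Suc n"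
    have "(x mod b ^ Suc n) mod b ^ n = x mod b ^ n" using ex bn by simp
    moreover have "(y mod b ^ Suc n) mod b ^ n = y mod b ^ n" using ey bn by simp
    ultimately have r: "x mod b ^ n = y mod b ^ n" using h by simp
    then have "b ^ n * ((x div b ^ n) mod b) = b ^ n * ((y div b ^ n) mod b)" using h ex ey by simp
    then have "(x div b ^ n) mod b = (y div b ^ n) mod b" using bn by (simp only: mult_left_cancel)
    then show "x mod b ^ n = y mod b ^ n \<and> (x div b ^ n) mod b = (y div b ^ n) mod b" using r by simp
  next
    assume "x mod b ^ n = y mod b ^ n \<and> (x div b ^ n) mod b = (y div b ^ n) mod b"
    then show "x mod b ^ Suc n = y mod b ^ Suc n" using ex ey by simp
  qed
  also have "\<dots> \<longleftrightarrow> (\<forall>k<Suc n. (x div b ^ k) mod b = (y div b ^ k) mod b)"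
    using Suc by (auto simp add: mod_eq_dvd_iff less_Suc_eq)
  finally show ?case .
qed

lemma ord_phi:
  fixes b x y :: int assumes "b \<ge> 2"
  shows "ord_t (phi_b b x - phi_b b y) = ord_b b (x - y)"
proof (rule enat_eqI_le)
  fix n
  have ph: "fps_nth (phi_b b z) k = of_int ((z div b ^ k) mod b)" for z k
    by (simp only: phi_b_def fps_nth_Abs_fps digit_eq[OF assms])
  have "fps_nth (phi_b b x - phi_b b y) k = 0 \<longleftrightarrow> (x div b ^ k) mod b = (y div b ^ k) mod b" for k
    by (simp only: fps_sub_nth ph) simp
  then show "enat n \<le> ord_t (phi_b b x - phi_b b y) \<longleftrightarrow> enat n \<le> ord_b b (x - y)"
    by (simp add: ord_t_le_iff ord_b_le_iff[OF assms] dvd_digits[OF assms])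
qed



lemma key:
  fixes b :: int and d :: nat
  assumes b: "b \<ge> 2"
  shows "\<And>X J (A :: nat \<Rightarrow> int). finite X \<Longrightarrow> finite J \<Longrightarrow> card J < card X \<Longrightarrow>
     (\<forall>x\<in>X. \<forall>y\<in>X. \<bar>x - y\<bar> \<le> int d) \<Longrightarrow>
     \<exists>x\<in>X. (\<Sum>j\<in>J. ord_b b (x - A j)) \<le> (\<Sum>y\<in>X-{x}. ord_b b (x - y))"
proof (induction d rule: less_induct)
  case (less d X J A)
  show ?case
  proof (cases "J = {}")
    case True
    from less.prems(3) have "X \<noteq> {}" by auto
    then obtain x where "x \<in> X" by blast
    then show ?thesis using True by auto
  next
    case False
    define Xr where "Xr r = {x\<in>X. x mod b = r}" for r
    define Jr where "Jr r = {j\<in>J. A j mod b = r}" for r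
    have modin: "z mod b \<in> {0..<b}" for z using b by simp
    have "\<exists>r\<in>{0..<b}. card (Jr r) < card (Xr r)"
    proof (rule ccontr)
      assume "\<not> ?thesis"
      then have "\<And>r. r \<in> {0..<b} \<Longrightarrow> card (Xr r) \<le> card (Jr r)" using leI by blast
      then have "(\<Sum>r\<in>{0..<b}. card (Xr r)) \<le> (\<Sum>r\<in>{0..<b}. card (Jr r))" by (rule sum_mono)
      moreover have "(\<Sum>r\<in>{0..<b}. card (Xr r)) = card X"
        using sum.group[of X "{0..<b}" "\<lambda>x. x mod b" "\<lambda>_. 1::nat"] less.prems(1) modin
        unfolding Xr_def by (simp add: image_subset_iff)
      moreover have "(\<Sum>r\<in>{0..<b}. card (Jr r)) = card J"
        using sum.group[of J "{0..<b}" "\<lambda>j. A j mod b" "\<lambda>_. 1::nat"] less.prems(2) modin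
        unfolding Jr_def by (simp add: image_subset_iff)
      ultimately show False using less.prems(3) by simp
    qed
    then obtain r where r: "r \<in> {0..<b}" "card (Jr r) < card (Xr r)" by blast
    have finXr: "finite (Xr r)" using less.prems(1) unfolding Xr_def by simp
    have finJr: "finite (Jr r)" using less.prems(2) unfolding Jr_def by simp
    have XrX: "Xr r \<subseteq> X" and JrJ: "Jr r \<subseteq> J" unfolding Xr_def Jr_def by auto
    have outside: "ord_b b (x - A j) = 0" if "x \<in> Xr r" "j \<in> J - Jr r" for x j
    proof -
      have "x mod b \<noteq> A j mod b" using that unfolding Xr_def Jr_def by auto
      then have "\<not> b dvd x - A j" by (simp add: mod_eq_dvd_iff)
      then show ?thesis by (rule ord_b_not_dvd[OF b])
    qed
    have sumJ: "(\<Sum>j\<in>J. ord_b b (x - A j)) = (\<Sum>j\<in>Jr r. ord_b b (x - A j))" if "x \<in> Xr r" for x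
      by (rule sum.mono_neutral_right[OF less.prems(2) JrJ]) (use outside[OF that] in auto)
    show ?thesis
    proof (cases "Jr r = {}")
      case True
      from r(2) have "Xr r \<noteq> {}" by auto
      then obtain x where x: "x \<in> Xr r" by blast
      have "(\<Sum>j\<in>J. ord_b b (x - A j)) = 0" using sumJ[OF x] True by simp
      then show ?thesis using x XrX by (intro bexI[of _ x]) auto
    next
      case False
      then have "card (Jr r) \<ge> 1" using finJr by (simp add: Suc_le_eq card_gt_0_iff)
      then have c2: "card (Xr r) \<ge> 2" using r(2) by simp
      then have "Xr r \<noteq> {}" by auto
      then obtain x1 where x1: "x1 \<in> Xr r" by blast
      have "card (Xr r - {x1}) \<ge> 1" using c2 x1 finXr by simp
      then have "Xr r - {x1} \<noteq> {}" by (metis card.empty not_one_le_zero)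
      then obtain x2 where x2: "x2 \<in> Xr r" "x2 \<noteq> x1" by blast
      have "\<bar>x2 - x1\<bar> \<le> int d" using less.prems(4) x1 x2 XrX by blast
      then have dpos: "d > 0" using x2(2) by auto
      have decomp: "z = b * (z div b) + r" if "z mod b = r" for z
        using that div_mult_mod_eq[of z b] by (simp add: mult.commute)
      have diff: "z - w = b * (z div b - w div b)" if "z mod b = r" "w mod b = r" for z w
        using decomp[OF that(1)] decomp[OF that(2)] by (simp add: algebra_simps)
      have inj: "inj_on (\<lambda>z. z div b) (Xr r)"
      proof (rule inj_onI)
        fix z w assume zw: "z \<in> Xr r" "w \<in> Xr r" "z div b = w div b"
        then have "z mod b = r" "w mod b = r" unfolding Xr_def by auto
        then have "z = b * (z div b) + r" "w = b * (w div b) + r" using decomp by blast+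
        then show "z = w" using zw(3) by simp
      qed
      define X' where "X' = (\<lambda>z. z div b) ` Xr r"
      define A' where "A' j = A j div b" for j
      have dist': "\<forall>x\<in>X'. \<forall>y\<in>X'. \<bar>x - y\<bar> \<le> int (d - 1)"
      proof (intro ballI)
        fix x y assume "x \<in> X'" "y \<in> X'"
        then obtain z w where zw: "z \<in> Xr r" "w \<in> Xr r" "x = z div b" "y = w div b"
          unfolding X'_def by blast
        have "\<bar>z - w\<bar> \<le> int d" using less.prems(4) zw XrX by blast
        moreover have "z - w = b * (x - y)" using diff zw unfolding Xr_def by auto
        ultimately have h: "b * \<bar>x - y\<bar> \<le> int d" using b by (simp add: abs_mult)
        show "\<bar>x - y\<bar> \<le> int (d - 1)"
        proof (rule ccontr)
          assume "\<not> ?thesis"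
          then have "\<bar>x - y\<bar> \<ge> int d" using dpos by simp
          then have "b * \<bar>x - y\<bar> \<ge> 2 * int d" using b
            by (meson mult_mono abs_ge_zero order_trans zero_le_numeral of_nat_0_le_iff)
          then show False using h dpos by simp
        qed
      qed
      have cardX': "card X' = card (Xr r)" unfolding X'_def using inj by (rule card_image)
      obtain x' where x': "x' \<in> X'" and
        ih: "(\<Sum>j\<in>Jr r. ord_b b (x' - A' j)) \<le> (\<Sum>y\<in>X'-{x'}. ord_b b (x' - y))"
        using less.IH[of "d - 1" X' "Jr r" A'] dpos finXr finJr r(2) cardX' dist'
        unfolding X'_def by auto
      obtain x where x: "x \<in> Xr r" "x' = x div b" using x' unfolding X'_def by blast
      have xr: "x mod b = r" using x unfolding Xr_def by simp
      have e2: "(\<Sum>j\<in>Jr r. ord_b b (x - A j)) = (\<Sum>j\<in>Jr r. ord_b b (x' - A' j) + 1)"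
      proof (rule sum.cong)
        fix j assume "j \<in> Jr r"
        then have "A j mod b = r" unfolding Jr_def by simp
        then have "x - A j = b * (x' - A' j)" using diff xr x(2) unfolding A'_def by simp
        then show "ord_b b (x - A j) = ord_b b (x' - A' j) + 1"
          by (simp add: ord_b_mult[OF b] eSuc_plus_1)
      qed simp
      have e5: "(\<Sum>y\<in>Xr r - {x}. ord_b b (x - y)) = (\<Sum>y\<in>Xr r - {x}. ord_b b (x' - y div b) + 1)"
      proof (rule sum.cong)
        fix y assume "y \<in> Xr r - {x}"
        then have "y mod b = r" unfolding Xr_def by simp
        then have "x - y = b * (x' - y div b)" using diff xr x(2) by simp
        then show "ord_b b (x - y) = ord_b b (x' - y div b) + 1"
          by (simp add: ord_b_mult[OF b] eSuc_plus_1)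
      qed simp
      have e4: "(\<Sum>y\<in>X'-{x'}. ord_b b (x' - y)) = (\<Sum>y\<in>Xr r - {x}. ord_b b (x' - y div b))"
      proof -
        have "X' - {x'} = (\<lambda>z. z div b) ` (Xr r - {x})"
          unfolding X'_def x(2) using inj x(1) by (auto simp: inj_on_image_set_diff[OF inj])
        moreover have "inj_on (\<lambda>z. z div b) (Xr r - {x})" using inj by (rule inj_on_subset) auto
        ultimately show ?thesis by (simp add: sum.reindex)
      qed
      have cc: "card (Jr r) \<le> card (Xr r - {x})" using r(2) x(1) finXr by simp
      have "(\<Sum>j\<in>J. ord_b b (x - A j)) = (\<Sum>j\<in>Jr r. ord_b b (x' - A' j)) + of_nat (card (Jr r))"
        using sumJ[OF x(1)] e2 by (simp add: sum.distrib)
      also have "\<dots> \<le> (\<Sum>y\<in>Xr r - {x}. ord_b b (x' - y div b)) + of_nat (card (Xr r - {x}))"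
        using ih e4 cc by (intro add_mono) (auto simp: of_nat_eq_enat)
      also have "\<dots> = (\<Sum>y\<in>Xr r - {x}. ord_b b (x - y))"
        using e5 by (simp add: sum.distrib)
      also have "\<dots> \<le> (\<Sum>y\<in>X - {x}. ord_b b (x - y))"
        by (rule sum_mono2) (use less.prems(1) XrX in auto)
      finally show ?thesis using x(1) XrX by blast
    qed
  qed
qed



definition DD :: "int \<Rightarrow> int set \<Rightarrow> enat" where
  "DD b X = (\<Sum>x\<in>X. \<Sum>y\<in>X-{x}. ord_b b (x - y))"

lemma ord_b_sym: "b \<ge> 2 \<Longrightarrow> ord_b b (x - y) = ord_b b (y - x)"
  using ord_b_uminus[of b "x - y"] by simp

lemma sum_enat_fin: "finite A \<Longrightarrow> (\<forall>i\<in>A. f i \<noteq> (\<infinity>::enat)) \<Longrightarrow> sum f A \<noteq> \<infinity>"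
  by (induction A rule: finite_induct) (auto simp: plus_eq_infty_iff_enat)

lemma sum_enat_inf: "finite A \<Longrightarrow> i \<in> A \<Longrightarrow> f i = (\<infinity>::enat) \<Longrightarrow> sum f A = \<infinity>"
  using member_le_sum[of i A f] by (simp add: top_unique[symmetric])

lemma DD_insert:
  assumes b: "b \<ge> 2" and X: "finite X" "x \<notin> X"
  shows "DD b (insert x X) = DD b X + 2 * (\<Sum>y\<in>X. ord_b b (x - y))"
proof -
  have "DD b (insert x X) = (\<Sum>y\<in>insert x X - {x}. ord_b b (x - y))
        + (\<Sum>z\<in>X. \<Sum>y\<in>insert x X - {z}. ord_b b (z - y))"
    unfolding DD_def using X by (simp add: sum.insert)
  also have "(\<Sum>y\<in>insert x X - {x}. ord_b b (x - y)) = (\<Sum>y\<in>X. ord_b b (x - y))"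
    using X by (metis Diff_insert_absorb)
  also have "(\<Sum>z\<in>X. \<Sum>y\<in>insert x X - {z}. ord_b b (z - y))
      = (\<Sum>z\<in>X. ord_b b (x - z) + (\<Sum>y\<in>X - {z}. ord_b b (z - y)))"
  proof (rule sum.cong)
    fix z assume z: "z \<in> X"
    have "insert x X - {z} = insert x (X - {z})" using z X by auto
    then show "(\<Sum>y\<in>insert x X - {z}. ord_b b (z - y)) = ord_b b (x - z) + (\<Sum>y\<in>X - {z}. ord_b b (z - y))"
      using X ord_b_sym[OF b, of z x] by simp
  qed simp
  also have "\<dots> = (\<Sum>z\<in>X. ord_b b (x - z)) + DD b X"
    unfolding DD_def by (simp add: sum.distrib)
  finally show ?thesis by (simp add: mult_2 add_ac)
qed

lemma DD_alpha:
  assumes b: "b \<ge> 2"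
  shows "inj_on a {..<n} \<Longrightarrow> DD b (a ` {..<n}) = 2 * (\<Sum>k<n. alpha_b b a k)"
proof (induction n)
  case 0 then show ?case by (simp add: DD_def)
next
  case (Suc n)
  have inj: "inj_on a {..<n}" using Suc.prems by (rule inj_on_subset) auto
  have nin: "a n \<notin> a ` {..<n}" using Suc.prems by (simp add: lessThan_Suc)
  have "DD b (a ` {..<Suc n}) = DD b (insert (a n) (a ` {..<n}))" by (simp add: lessThan_Suc)
  also have "\<dots> = DD b (a ` {..<n}) + 2 * (\<Sum>y\<in>a ` {..<n}. ord_b b (a n - y))"
    using DD_insert[OF b _ nin] by simp
  also have "(\<Sum>y\<in>a ` {..<n}. ord_b b (a n - y)) = alpha_b b a n"
    unfolding alpha_b_def using inj by (simp add: sum.reindex)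
  finally show ?case using Suc.IH[OF inj] by (simp add: distrib_left)
qed

lemma diam_exists:
  assumes "finite (X :: int set)"
  shows "\<exists>d::nat. \<forall>x\<in>X. \<forall>y\<in>X. \<bar>x - y\<bar> \<le> int d"
proof -
  let ?M = "(\<lambda>(x, y). nat \<bar>x - y\<bar>) ` (X \<times> X)"
  have fin: "finite ?M" using assms by simp
  have "\<forall>x\<in>X. \<forall>y\<in>X. \<bar>x - y\<bar> \<le> int (Max ?M)"
  proof (intro ballI)
    fix x y assume "x \<in> X" "y \<in> X"
    then have "nat \<bar>x - y\<bar> \<in> ?M" by force
    then have "nat \<bar>x - y\<bar> \<le> Max ?M" using fin by (rule Max_ge[rotated])
    then show "\<bar>x - y\<bar> \<le> int (Max ?M)" by linarith
  qed
  then show ?thesis by blast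
qed

lemma bhargava:
  assumes b: "b \<ge> 2" and ord: "is_b_ordering S b a"
  shows "X \<subseteq> S \<Longrightarrow> finite X \<Longrightarrow> card X = n \<Longrightarrow> 2 * (\<Sum>k<n. alpha_b b a k) \<le> DD b X"
proof (induction n arbitrary: X)
  case 0 then show ?case by simp
next
  case (Suc n)
  obtain d where d: "\<forall>x\<in>X. \<forall>y\<in>X. \<bar>x - y\<bar> \<le> int d" using diam_exists[OF Suc.prems(2)] by blast
  obtain x where x: "x \<in> X" and
    kx: "(\<Sum>j\<in>{..<n}. ord_b b (x - a j)) \<le> (\<Sum>y\<in>X-{x}. ord_b b (x - y))"
    using key[OF b, of X "{..<n}" d a] Suc.prems(2,3) d by auto
  have "alpha_b b a n \<le> (\<Sum>j\<in>{..<n}. ord_b b (x - a j))"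
  proof (cases "n = 0")
    case True then show ?thesis by (simp add: alpha_b_def)
  next
    case False
    then show ?thesis using ord x Suc.prems(1) unfolding is_b_ordering_def alpha_b_def by auto
  qed
  then have al: "alpha_b b a n \<le> (\<Sum>y\<in>X-{x}. ord_b b (x - y))" using kx by (rule order_trans)
  have IH: "2 * (\<Sum>k<n. alpha_b b a k) \<le> DD b (X - {x})"
    using Suc.IH[of "X - {x}"] Suc.prems x by auto
  have "DD b X = DD b (insert x (X - {x}))" using x by (simp add: insert_absorb)
  also have "\<dots> = DD b (X - {x}) + 2 * (\<Sum>y\<in>X-{x}. ord_b b (x - y))"
    using DD_insert[OF b, of "X - {x}" x] Suc.prems(2) by simp
  finally have e1: "DD b X = DD b (X - {x}) + 2 * (\<Sum>y\<in>X-{x}. ord_b b (x - y))" .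
  have e2: "2 * (\<Sum>k<Suc n. alpha_b b a k) = 2 * (\<Sum>k<n. alpha_b b a k) + 2 * alpha_b b a n"
    by (simp add: distrib_left)
  have "2 * alpha_b b a n \<le> 2 * (\<Sum>y\<in>X-{x}. ord_b b (x - y))"
    using al unfolding mult_2 by (rule add_mono[OF _ al])
  with IH have "2 * (\<Sum>k<n. alpha_b b a k) + 2 * alpha_b b a n
     \<le> DD b (X - {x}) + 2 * (\<Sum>y\<in>X-{x}. ord_b b (x - y))" by (rule add_mono)
  then show ?case unfolding e1 e2 .
qed

lemma G1:
  assumes b: "b \<ge> 2" and ord: "is_b_ordering S b a" and nc: "\<not> S \<subseteq> a ` {..<k}"
  shows "a k \<notin> a ` {..<k}"
proof
  assume ak: "a k \<in> a ` {..<k}"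
  then obtain j where j: "j < k" "a k = a j" by auto
  obtain y where y: "y \<in> S" "y \<notin> a ` {..<k}" using nc by blast
  have "k \<ge> 1" using j by simp
  then have "(\<Sum>j<k. ord_b b (a k - a j)) \<le> (\<Sum>j<k. ord_b b (y - a j))"
    using ord y(1) unfolding is_b_ordering_def by blast
  moreover have "(\<Sum>j<k. ord_b b (y - a j)) \<noteq> \<infinity>"
    by (rule sum_enat_fin) (use y in \<open>auto simp: ord_b_inf_iff\<close>)
  moreover have "(\<Sum>j<k. ord_b b (a k - a j)) = \<infinity>"
    by (rule sum_enat_inf[of _ j]) (use j in \<open>auto simp: ord_b_inf_iff\<close>)
  ultimately show False by simp
qed

lemma G2:
  assumes ord: "is_b_ordering S b a" and c: "S \<subseteq> a ` {..<k}"
  shows "alpha_b b a k = \<infinity>"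
proof -
  have "a k \<in> S" using ord unfolding is_b_ordering_def by auto
  then obtain j where j: "j < k" "a k = a j" using c by auto
  show ?thesis unfolding alpha_b_def
    by (rule sum_enat_inf[of _ j]) (use j in \<open>auto simp: ord_b_inf_iff\<close>)
qed

lemma G_inj:
  assumes b: "b \<ge> 2" and ord: "is_b_ordering S b a" and nc: "\<not> S \<subseteq> a ` {..<k}"
  shows "inj_on a {..<Suc k}"
proof -
  have "m \<le> Suc k \<Longrightarrow> inj_on a {..<m}" for m
  proof (induction m)
    case 0 then show ?case by simp
  next
    case (Suc m)
    have "\<not> S \<subseteq> a ` {..<m}" using nc Suc.prems by (meson image_mono lessThan_subset_iff order_trans Suc_le_mono)
    then have "a m \<notin> a ` {..<m}" by (rule G1[OF b ord])
    then show ?case using Suc by (simp add: lessThan_Suc)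
  qed
  then show ?thesis by simp
qed

lemma alpha_fin:
  assumes "inj_on a {..<Suc k}"
  shows "alpha_b b a k \<noteq> \<infinity>"
  unfolding alpha_b_def
proof (rule sum_enat_fin)
  show "\<forall>i\<in>{..<k}. ord_b b (a k - a i) \<noteq> \<infinity>"
  proof
    fix i assume "i \<in> {..<k}"
    then have "a k \<noteq> a i" using inj_onD[OF assms, of k i] by auto
    then show "ord_b b (a k - a i) \<noteq> \<infinity>" by (simp add: ord_b_inf_iff)
  qed
qed simp

lemma cover:
  assumes b: "b \<ge> 2" and o1: "is_b_ordering S b a" and o2: "is_b_ordering S b a'"
    and c: "S \<subseteq> a ` {..<k}"
  shows "S \<subseteq> a' ` {..<k}"
proof (rule ccontr)
  assume "\<not> ?thesis"
  then have inj: "inj_on a' {..<Suc k}" by (rule G_inj[OF b o2])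
  have "a' ` {..<Suc k} \<subseteq> S" using o2 unfolding is_b_ordering_def by auto
  then have "card (a' ` {..<Suc k}) \<le> card (a ` {..<k})"
    using c by (intro card_mono) auto
  also have "\<dots> \<le> k" using card_image_le[of "{..<k}" a] by simp
  finally show False using card_image[OF inj] by simp
qed

lemma two_cancel: "2 * x = 2 * (y::enat) \<Longrightarrow> x = y"
  by (cases x; cases y) (auto simp: numeral_eq_enat)

lemma indep:
  assumes b: "b \<ge> 2" and o1: "is_b_ordering S b a" and o2: "is_b_ordering S b a'"
  shows "alpha_b b a k = alpha_b b a' k"
proof (cases "S \<subseteq> a ` {..<k} \<or> S \<subseteq> a' ` {..<k}")
  case True
  then have "S \<subseteq> a ` {..<k} \<and> S \<subseteq> a' ` {..<k}" using cover[OF b o1 o2] cover[OF b o2 o1] by blast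
  then show ?thesis using G2[OF o1] G2[OF o2] by simp
next
  case False
  then have i1: "inj_on a {..<Suc k}" and i2: "inj_on a' {..<Suc k}"
    using G_inj[OF b o1] G_inj[OF b o2] by auto
  have P: "(\<Sum>j<n. alpha_b b a j) = (\<Sum>j<n. alpha_b b a' j)" if n: "n \<le> Suc k" for n
  proof -
    have j1: "inj_on a {..<n}" by (rule inj_on_subset[OF i1]) (use n in auto)
    have j2: "inj_on a' {..<n}" by (rule inj_on_subset[OF i2]) (use n in auto)
    have s1: "a ` {..<n} \<subseteq> S" and s2: "a' ` {..<n} \<subseteq> S"
      using o1 o2 unfolding is_b_ordering_def by auto
    have "2 * (\<Sum>j<n. alpha_b b a j) \<le> DD b (a' ` {..<n})"
      by (rule bhargava[OF b o1 s2]) (use card_image[OF j2] in auto)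
    also have "\<dots> = 2 * (\<Sum>j<n. alpha_b b a' j)" by (rule DD_alpha[OF b j2])
    finally have le1: "2 * (\<Sum>j<n. alpha_b b a j) \<le> 2 * (\<Sum>j<n. alpha_b b a' j)" .
    have "2 * (\<Sum>j<n. alpha_b b a' j) \<le> DD b (a ` {..<n})"
      by (rule bhargava[OF b o2 s1]) (use card_image[OF j1] in auto)
    also have "\<dots> = 2 * (\<Sum>j<n. alpha_b b a j)" by (rule DD_alpha[OF b j1])
    finally have "2 * (\<Sum>j<n. alpha_b b a j) = 2 * (\<Sum>j<n. alpha_b b a' j)" using le1 by simp
    then show ?thesis by (rule two_cancel)
  qed
  have fin: "(\<Sum>j<k. alpha_b b a j) \<noteq> \<infinity>"
  proof (rule sum_enat_fin)
    show "\<forall>i\<in>{..<k}. alpha_b b a i \<noteq> \<infinity>"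
    proof
      fix i assume "i \<in> {..<k}"
      then have "inj_on a {..<Suc i}" by (intro inj_on_subset[OF i1]) auto
      then show "alpha_b b a i \<noteq> \<infinity>" by (rule alpha_fin)
    qed
  qed simp
  have "(\<Sum>j<k. alpha_b b a j) + alpha_b b a k = (\<Sum>j<k. alpha_b b a' j) + alpha_b b a' k"
    using P[of "Suc k"] by simp
  then show ?thesis using P[of k] fin by (auto simp add: enat_add_left_cancel)
qed

lemma tord:
  assumes b: "b \<ge> 2" and ord: "is_b_ordering S b a"
  shows "is_t_ordering (phi_b b ` S) (phi_b b \<circ> a)"
  unfolding is_t_ordering_def
proof (intro conjI allI impI ballI)
  fix i show "(phi_b b \<circ> a) i \<in> phi_b b ` S" using ord unfolding is_b_ordering_def by simp
next
  fix k :: nat and g assume k: "1 \<le> k" and g: "g \<in> phi_b b ` S"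
  then obtain y where y: "y \<in> S" "g = phi_b b y" by blast
  have "(\<Sum>j<k. ord_b b (a k - a j)) \<le> (\<Sum>j<k. ord_b b (y - a j))"
    using ord k y(1) unfolding is_b_ordering_def by blast
  then show "(\<Sum>j<k. ord_t ((phi_b b \<circ> a) k - (phi_b b \<circ> a) j)) \<le> (\<Sum>j<k. ord_t (g - (phi_b b \<circ> a) j))"
    unfolding y(2) o_def ord_phi[OF b] .
qed

lemma pull:
  assumes b: "b \<ge> 2" and tf: "is_t_ordering (phi_b b ` S) f"
  shows "\<exists>c. is_b_ordering S b c \<and> (\<forall>k. alpha_t_seq f k = alpha_b b c k)"
proof -
  define c where "c i = (SOME y. y \<in> S \<and> phi_b b y = f i)" for i
  have "\<exists>y. y \<in> S \<and> phi_b b y = f i" for i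
  proof -
    have "f i \<in> phi_b b ` S" using tf unfolding is_t_ordering_def by blast
    then obtain y where "y \<in> S" "f i = phi_b b y" by (rule imageE)
    then show ?thesis by auto
  qed
  then have c: "c i \<in> S \<and> phi_b b (c i) = f i" for i unfolding c_def by (rule someI_ex)
  have cS: "c i \<in> S" for i using c by blast
  have fc: "f = (\<lambda>i. phi_b b (c i))" using c by (simp add: fun_eq_iff)
  have tf2: "\<forall>k\<ge>1. \<forall>g\<in>phi_b b ` S. (\<Sum>j<k. ord_t (phi_b b (c k) - phi_b b (c j))) \<le> (\<Sum>j<k. ord_t (g - phi_b b (c j)))"
    using tf unfolding is_t_ordering_def fc by blast
  have "is_b_ordering S b c"
    unfolding is_b_ordering_def
  proof (intro conjI allI impI ballI)
    fix i show "c i \<in> S" by (rule cS)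
  next
    fix i :: nat and y assume i: "1 \<le> i" and y: "y \<in> S"
    have "phi_b b y \<in> phi_b b ` S" using y by blast
    then have "(\<Sum>j<i. ord_t (phi_b b (c i) - phi_b b (c j))) \<le> (\<Sum>j<i. ord_t (phi_b b y - phi_b b (c j)))"
      using tf2 i by blast
    then show "(\<Sum>j<i. ord_b b (c i - c j)) \<le> (\<Sum>j<i. ord_b b (y - c j))"
      unfolding ord_phi[OF b] .
  qed
  moreover have "\<forall>k. alpha_t_seq f k = alpha_b b c k"
    unfolding alpha_t_seq_def alpha_b_def fc ord_phi[OF b] by simp
  ultimately show ?thesis by blast
qed

theorem theorem5p3:
  fixes b :: int and S :: "int set"
  assumes "b \<ge> 2" and "S \<noteq> {}"
  shows "(\<forall>a a'. is_b_ordering S b a \<and> is_b_ordering S b a' \<longrightarrow>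
            (\<forall>k. alpha_b b a k = alpha_b b a' k))
       \<and> (\<forall>a. is_b_ordering S b a \<longrightarrow>
            (\<forall>k\<ge>1. alpha_b b a k = t_exponent (phi_b b ` S) k))"
proof (intro conjI allI impI)
  fix a a' k assume "is_b_ordering S b a \<and> is_b_ordering S b a'"
  then show "alpha_b b a k = alpha_b b a' k" using indep[OF assms(1)] by blast
next
  fix a k assume o: "is_b_ordering S b a" and "k \<ge> (1::nat)"
  let ?U = "phi_b b ` S"
  have "\<exists>f. is_t_ordering ?U f" using tord[OF assms(1) o] by blast
  then have "is_t_ordering ?U (SOME f. is_t_ordering ?U f)" by (rule someI_ex)
  then obtain c where c: "is_b_ordering S b c"
    "\<forall>k. alpha_t_seq (SOME f. is_t_ordering ?U f) k = alpha_b b c k"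
    using pull[OF assms(1)] by blast
  show "alpha_b b a k = t_exponent ?U k"
    unfolding t_exponent_def using c indep[OF assms(1) o c(1)] by simp
qed


end
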